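(* Consider a point-to-point block-fading channel whose channel power gain $h(\nu)\ge 0$ at fading state $\nu$ is a random variable with a continuous probability density function, let $\sigma^2>0$ be the receiver noise power and $P_{\rm peak}>0$ a fixed peak power. For a target energy $\bar Q\ge 0$ and an average power budget $P_{\rm avg}\le P_{\rm peak}$, let Problem (P2)$(\bar Q,P_{\rm avg})$ be: maximize $E_\nu[\log(1+\alpha(\nu)h(\nu)p(\nu)/\sigma^2)]$ over functions $p(\nu),\alpha(\nu)$ subject to $E_\nu[(1-\alpha(\nu))h(\nu)p(\nu)]\ge \bar Q$, $E_\nu[p(\nu)]\le P_{\rm avg}$, $0\le p(\nu)\le P_{\rm peak}$ and $0\le\alpha(\nu)\le 1$ for all $\nu$. Let $\{p^a(\nu),\alpha^a(\nu)\}$ and $\{p^b(\nu),\alpha^b(\nu)\}$ be optimal solutions of (P2)$(\bar Q^a,P^a_{\rm avg})$ and (P2)$(\bar Q^b,P^b_{\rm avg})$, respectively. Then for any $0\le\theta\le1$ there exists a feasible pair $\{p^c(\nu),\alpha^c(\nu)\}$ (i.e. $0\le p^c(\nu)\le P_{\rm peak}$, $0\le \alpha^c(\nu)\le 1$ for all $\nu$) such that $E_\nu[r^c(\nu)]\ge\theta E_\nu[r^a(\nu)]+(1-\theta)E_\nu[r^b(\nu)]$, $E_\nu[Q^c(\nu)]\ge\theta\bar Q^a+(1-\theta)\bar Q^b$, and $E_\nu[p^c(\nu)]\le\theta P^a_{\rm avg}+(1-\theta)P^b_{\rm avg}$, where $r^\chi(\nu)=\log\big(1+\frac{h(\nu)\alpha^\chi(\nu)p^\chi(\nu)}{\sigma^2}\big)$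 for $\chi\in\{a,b,c\}$ and $Q^c(\nu)=(1-\alpha^c(\nu))h(\nu)p^c(\nu)$.
   Context: $p(\nu)$ is the transmit power and $\alpha(\nu)\in[0,1]$ the fraction of received signal power split to the information decoder at fading state $\nu$ (the rest goes to the energy harvester); $E_\nu$ denotes expectation over the fading state. *)

theory Defs
  imports "HOL-Probability.Probability"
begin

definition rate :: "real \<Rightarrow> ('a \<Rightarrow> real) \<Rightarrow> ('a \<Rightarrow> real) \<Rightarrow> ('a \<Rightarrow> real) \<Rightarrow> 'a \<Rightarrow> real" where
  "rate \<sigma>2 h \<alpha> p \<nu> = ln (1 + h \<nu> * \<alpha> \<nu> * p \<nu> / \<sigma>2)"

definition energy :: "('a \<Rightarrow> real) \<Rightarrow> ('a \<Rightarrow> real) \<Rightarrow> ('a \<Rightarrow> real) \<Rightarrow> 'a \<Rightarrow> real" where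
  "energy h \<alpha> p \<nu> = (1 - \<alpha> \<nu>) * h \<nu> * p \<nu>"

definition pointwise_feasible :: "'a measure \<Rightarrow> real \<Rightarrow> ('a \<Rightarrow> real) \<Rightarrow> ('a \<Rightarrow> real) \<Rightarrow> bool" where
  "pointwise_feasible M Ppeak p \<alpha> \<longleftrightarrow>
     p \<in> borel_measurable M \<and> \<alpha> \<in> borel_measurable M \<and>
     (\<forall>\<nu>\<in>space M. 0 \<le> p \<nu> \<and> p \<nu> \<le> Ppeak \<and> 0 \<le> \<alpha> \<nu> \<and> \<alpha> \<nu> \<le> 1)"

definition avg_rate :: "'a measure \<Rightarrow> real \<Rightarrow> ('a \<Rightarrow> real) \<Rightarrow> ('a \<Rightarrow> real) \<Rightarrow> ('a \<Rightarrow> real) \<Rightarrow> ennreal" where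
  "avg_rate M \<sigma>2 h p \<alpha> = (\<integral>\<^sup>+ \<nu>. ennreal (rate \<sigma>2 h \<alpha> p \<nu>) \<partial>M)"

definition avg_energy :: "'a measure \<Rightarrow> ('a \<Rightarrow> real) \<Rightarrow> ('a \<Rightarrow> real) \<Rightarrow> ('a \<Rightarrow> real) \<Rightarrow> ennreal" where
  "avg_energy M h p \<alpha> = (\<integral>\<^sup>+ \<nu>. ennreal (energy h \<alpha> p \<nu>) \<partial>M)"

definition P2_feasible :: "'a measure \<Rightarrow> ('a \<Rightarrow> real) \<Rightarrow> real \<Rightarrow> real \<Rightarrow> real \<Rightarrow> ('a \<Rightarrow> real) \<Rightarrow> ('a \<Rightarrow> real) \<Rightarrow> bool" where
  "P2_feasible M h Ppeak Qbar Pavg p \<alpha> \<longleftrightarrow>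
     pointwise_feasible M Ppeak p \<alpha> \<and>
     avg_energy M h p \<alpha> \<ge> ennreal Qbar \<and>
     (\<integral>\<nu>. p \<nu> \<partial>M) \<le> Pavg"

definition P2_optimal :: "'a measure \<Rightarrow> ('a \<Rightarrow> real) \<Rightarrow> real \<Rightarrow> real \<Rightarrow> real \<Rightarrow> real \<Rightarrow> ('a \<Rightarrow> real) \<Rightarrow> ('a \<Rightarrow> real) \<Rightarrow> bool" where
  "P2_optimal M h \<sigma>2 Ppeak Qbar Pavg p \<alpha> \<longleftrightarrow>
     P2_feasible M h Ppeak Qbar Pavg p \<alpha> \<and>
     (\<forall>p' \<alpha>'. P2_feasible M h Ppeak Qbar Pavg p' \<alpha>' \<longrightarrow>
        avg_rate M \<sigma>2 h p' \<alpha>' \<le> avg_rate M \<sigma>2 h p \<alpha>)"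

end

theory Submission
  imports Defs
begin

lemma ln_mix:
  fixes u v t :: real
  assumes "u > 0" "v > 0" "0 \<le> t" "t \<le> 1"
  shows "t * ln u + (1 - t) * ln v \<le> ln (t * u + (1 - t) * v)"
proof -
  have "(1 - (1 - t)) * ln u + (1 - t) * ln v \<le> ln ((1 - (1 - t)) *\<^sub>R u + (1 - t) *\<^sub>R v)"
    using concave_onD[OF ln_concave, of "1 - t" u v] assms by simp
  then show ?thesis by (simp add: algebra_simps)
qed

lemma mix_lin:
  fixes A B C t s :: real
  assumes "C = t * A + (1 - t) * B" "s > 0"
  shows "t * (1 + A / s) + (1 - t) * (1 + B / s) = 1 + C / s"
  proof - have "t * (1 + A / s) + (1 - t) * (1 + B / s) = 1 + (t * A + (1 - t) * B) / s" using assms(2) by (simp add: field_simps) then show ?thesis using assms(1) by simp qed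

theorem lemma3p1:
  fixes M :: "'a measure" and h :: "'a \<Rightarrow> real" and g :: "real \<Rightarrow> real"
    and \<sigma>2 Ppeak Qa Qb Pa Pb \<theta> :: real
    and pa \<alpha>a pb \<alpha>b :: "'a \<Rightarrow> real"
  assumes "prob_space M"
    and "h \<in> borel_measurable M" and "\<forall>\<nu>\<in>space M. 0 \<le> h \<nu>"
    and "distributed M lborel h (\<lambda>x. ennreal (g x))" and "continuous_on {0..} g"
    and "\<sigma>2 > 0" and "Ppeak > 0"
    and "Qa \<ge> 0" and "Qb \<ge> 0" and "Pa \<le> Ppeak" and "Pb \<le> Ppeak"
    and "P2_optimal M h \<sigma>2 Ppeak Qa Pa pa \<alpha>a"
    and "P2_optimal M h \<sigma>2 Ppeak Qb Pb pb \<alpha>b"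
    and "0 \<le> \<theta>" and "\<theta> \<le> 1"
  shows "\<exists>pc \<alpha>c. pointwise_feasible M Ppeak pc \<alpha>c \<and>
           avg_rate M \<sigma>2 h pc \<alpha>c \<ge>
             ennreal \<theta> * avg_rate M \<sigma>2 h pa \<alpha>a + ennreal (1 - \<theta>) * avg_rate M \<sigma>2 h pb \<alpha>b \<and>
           avg_energy M h pc \<alpha>c \<ge> ennreal (\<theta> * Qa + (1 - \<theta>) * Qb) \<and>
           (\<integral>\<nu>. pc \<nu> \<partial>M) \<le> \<theta> * Pa + (1 - \<theta>) * Pb"
proof -
  interpret prob_space M by fact
  have fa: "pointwise_feasible M Ppeak pa \<alpha>a" "avg_energy M h pa \<alpha>a \<ge> ennreal Qa"
    "(\<integral>\<nu>. pa \<nu> \<partial>M) \<le> Pa"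
    using assms(12) unfolding P2_optimal_def P2_feasible_def by auto
  have fb: "pointwise_feasible M Ppeak pb \<alpha>b" "avg_energy M h pb \<alpha>b \<ge> ennreal Qb"
    "(\<integral>\<nu>. pb \<nu> \<partial>M) \<le> Pb"
    using assms(13) unfolding P2_optimal_def P2_feasible_def by auto
  have ma: "pa \<in> borel_measurable M" "\<alpha>a \<in> borel_measurable M"
    and ba: "\<And>\<nu>. \<nu> \<in> space M \<Longrightarrow> 0 \<le> pa \<nu> \<and> pa \<nu> \<le> Ppeak \<and> 0 \<le> \<alpha>a \<nu> \<and> \<alpha>a \<nu> \<le> 1"
    using fa(1) unfolding pointwise_feasible_def by auto
  have mb: "pb \<in> borel_measurable M" "\<alpha>b \<in> borel_measurable M"
    and bb: "\<And>\<nu>. \<nu> \<in> space M \<Longrightarrow> 0 \<le> pb \<nu> \<and> pb \<nu> \<le> Ppeak \<and> 0 \<le> \<alpha>b \<nu> \<and> \<alpha>b \<nu> \<le> 1"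
    using fb(1) unfolding pointwise_feasible_def by auto
  have hnn: "\<And>\<nu>. \<nu> \<in> space M \<Longrightarrow> 0 \<le> h \<nu>" using assms(3) by auto
  define pc where "pc = (\<lambda>\<nu>. \<theta> * pa \<nu> + (1 - \<theta>) * pb \<nu>)"
  define xc where "xc = (\<lambda>\<nu>. \<theta> * (\<alpha>a \<nu> * pa \<nu>) + (1 - \<theta>) * (\<alpha>b \<nu> * pb \<nu>))"
  define \<alpha>c where "\<alpha>c = (\<lambda>\<nu>. if pc \<nu> = 0 then 0 else xc \<nu> / pc \<nu>)"
  have xc_bd: "0 \<le> xc \<nu> \<and> xc \<nu> \<le> pc \<nu>" if "\<nu> \<in> space M" for \<nu>
  proof -
    have a: "\<alpha>a \<nu> * pa \<nu> \<le> pa \<nu>" "0 \<le> \<alpha>a \<nu> * pa \<nu>"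
      using ba[OF that] by (auto simp: mult_left_le_one_le)
    have b: "\<alpha>b \<nu> * pb \<nu> \<le> pb \<nu>" "0 \<le> \<alpha>b \<nu> * pb \<nu>"
      using bb[OF that] by (auto simp: mult_left_le_one_le)
    show ?thesis unfolding xc_def pc_def using a b assms(14,15)
      by (auto intro!: add_mono mult_left_mono)
  qed
  have pc_bd: "0 \<le> pc \<nu> \<and> pc \<nu> \<le> Ppeak" if "\<nu> \<in> space M" for \<nu>
  proof -
    have "pc \<nu> \<le> \<theta> * Ppeak + (1 - \<theta>) * Ppeak" unfolding pc_def
      using ba[OF that] bb[OF that] assms(14,15) by (auto intro!: add_mono mult_left_mono)
    moreover have "0 \<le> \<theta> * pa \<nu>" "0 \<le> (1 - \<theta>) * pb \<nu>"
      using ba[OF that] bb[OF that] assms(14,15) by (auto intro!: mult_nonneg_nonneg)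
    moreover have "\<theta> * Ppeak + (1 - \<theta>) * Ppeak = Ppeak" by (simp add: algebra_simps)
    ultimately show ?thesis unfolding pc_def by linarith
  qed
  have axc: "\<alpha>c \<nu> * pc \<nu> = xc \<nu>" if "\<nu> \<in> space M" for \<nu>
    using xc_bd[OF that] by (auto simp: \<alpha>c_def)
  have ac_bd: "0 \<le> \<alpha>c \<nu> \<and> \<alpha>c \<nu> \<le> 1" if "\<nu> \<in> space M" for \<nu>
    using xc_bd[OF that] pc_bd[OF that] by (auto simp: \<alpha>c_def divide_le_eq_1)
  have mpc: "pc \<in> borel_measurable M" unfolding pc_def using ma mb by measurable
  have mxc: "xc \<in> borel_measurable M" unfolding xc_def using ma mb by measurable
  have mac: "\<alpha>c \<in> borel_measurable M" unfolding \<alpha>c_def using mpc mxc by measurable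
  have feas: "pointwise_feasible M Ppeak pc \<alpha>c"
    unfolding pointwise_feasible_def using mpc mac pc_bd ac_bd by auto
  have rnn: "0 \<le> rate \<sigma>2 h \<alpha> p \<nu>" if "\<nu> \<in> space M" "0 \<le> \<alpha> \<nu>" "0 \<le> p \<nu>" for \<alpha> p \<nu>
    unfolding rate_def using hnn[OF that(1)] that(2,3) assms(6) by auto
  have rmix: "\<theta> * rate \<sigma>2 h \<alpha>a pa \<nu> + (1 - \<theta>) * rate \<sigma>2 h \<alpha>b pb \<nu> \<le> rate \<sigma>2 h \<alpha>c pc \<nu>"
    if "\<nu> \<in> space M" for \<nu>
  proof -
    have ua: "0 < 1 + h \<nu> * \<alpha>a \<nu> * pa \<nu> / \<sigma>2"
      using hnn[OF that] ba[OF that] assms(6) by (auto intro!: add_pos_nonneg)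
    have ub: "0 < 1 + h \<nu> * \<alpha>b \<nu> * pb \<nu> / \<sigma>2"
      using hnn[OF that] bb[OF that] assms(6) by (auto intro!: add_pos_nonneg)
    have eq: "\<theta> * (1 + h \<nu> * \<alpha>a \<nu> * pa \<nu> / \<sigma>2) + (1 - \<theta>) * (1 + h \<nu> * \<alpha>b \<nu> * pb \<nu> / \<sigma>2)
       = 1 + h \<nu> * \<alpha>c \<nu> * pc \<nu> / \<sigma>2"
    proof -
      have "h \<nu> * \<alpha>c \<nu> * pc \<nu> = h \<nu> * xc \<nu>" using axc[OF that] by (simp add: mult.assoc)
      also have "\<dots> = \<theta> * (h \<nu> * \<alpha>a \<nu> * pa \<nu>) + (1 - \<theta>) * (h \<nu> * \<alpha>b \<nu> * pb \<nu>)"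
        unfolding xc_def by (simp add: algebra_simps)
      finally show ?thesis using assms(6) by (intro mix_lin) auto
    qed
    show ?thesis unfolding rate_def using ln_mix[OF ua ub assms(14,15)] eq by simp
  qed
  have mra: "(\<lambda>\<nu>. rate \<sigma>2 h \<alpha>a pa \<nu>) \<in> borel_measurable M"
    unfolding rate_def using ma assms(2) by measurable
  have mrb: "(\<lambda>\<nu>. rate \<sigma>2 h \<alpha>b pb \<nu>) \<in> borel_measurable M"
    unfolding rate_def using mb assms(2) by measurable
  have rate_ok: "ennreal \<theta> * avg_rate M \<sigma>2 h pa \<alpha>a + ennreal (1 - \<theta>) * avg_rate M \<sigma>2 h pb \<alpha>b
      \<le> avg_rate M \<sigma>2 h pc \<alpha>c"
  proof -
    have "ennreal \<theta> * avg_rate M \<sigma>2 h pa \<alpha>a + ennreal (1 - \<theta>) * avg_rate M \<sigma>2 h pb \<alpha>b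
      = (\<integral>\<^sup>+ \<nu>. ennreal \<theta> * ennreal (rate \<sigma>2 h \<alpha>a pa \<nu>) + ennreal (1 - \<theta>) * ennreal (rate \<sigma>2 h \<alpha>b pb \<nu>) \<partial>M)"
      unfolding avg_rate_def using mra mrb
      by (simp add: nn_integral_add nn_integral_cmult)
    also have "\<dots> \<le> avg_rate M \<sigma>2 h pc \<alpha>c"
      unfolding avg_rate_def
    proof (rule nn_integral_mono)
      fix \<nu> assume v: "\<nu> \<in> space M"
      have "ennreal \<theta> * ennreal (rate \<sigma>2 h \<alpha>a pa \<nu>) + ennreal (1 - \<theta>) * ennreal (rate \<sigma>2 h \<alpha>b pb \<nu>)
         = ennreal (\<theta> * rate \<sigma>2 h \<alpha>a pa \<nu> + (1 - \<theta>) * rate \<sigma>2 h \<alpha>b pb \<nu>)"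
        using rnn[OF v, of \<alpha>a pa] rnn[OF v, of \<alpha>b pb] ba[OF v] bb[OF v] assms(14,15)
        by (simp add: ennreal_mult ennreal_plus)
      also have "\<dots> \<le> ennreal (rate \<sigma>2 h \<alpha>c pc \<nu>)"
        using rmix[OF v] by (rule ennreal_leI)
      finally show "ennreal \<theta> * ennreal (rate \<sigma>2 h \<alpha>a pa \<nu>) + ennreal (1 - \<theta>) * ennreal (rate \<sigma>2 h \<alpha>b pb \<nu>)
         \<le> ennreal (rate \<sigma>2 h \<alpha>c pc \<nu>)" .
    qed
    finally show ?thesis .
  qed
  have enn: "0 \<le> energy h \<alpha> p \<nu>" if "\<nu> \<in> space M" "\<alpha> \<nu> \<le> 1" "0 \<le> p \<nu>" for \<alpha> p \<nu>
    unfolding energy_def using hnn[OF that(1)] that(2,3) by auto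
  have emix: "energy h \<alpha>c pc \<nu> = \<theta> * energy h \<alpha>a pa \<nu> + (1 - \<theta>) * energy h \<alpha>b pb \<nu>"
    if "\<nu> \<in> space M" for \<nu>
  proof -
    have "energy h \<alpha>c pc \<nu> = h \<nu> * (pc \<nu> - \<alpha>c \<nu> * pc \<nu>)" unfolding energy_def by (simp add: algebra_simps)
    also have "\<dots> = h \<nu> * (pc \<nu> - xc \<nu>)" using axc[OF that] by simp
    finally show ?thesis unfolding energy_def pc_def xc_def by (simp add: algebra_simps)
  qed
  have mea: "(\<lambda>\<nu>. energy h \<alpha>a pa \<nu>) \<in> borel_measurable M"
    unfolding energy_def using ma assms(2) by measurable
  have meb: "(\<lambda>\<nu>. energy h \<alpha>b pb \<nu>) \<in> borel_measurable M"
    unfolding energy_def using mb assms(2) by measurable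
  have energy_ok: "ennreal (\<theta> * Qa + (1 - \<theta>) * Qb) \<le> avg_energy M h pc \<alpha>c"
  proof -
    have "avg_energy M h pc \<alpha>c
      = (\<integral>\<^sup>+ \<nu>. ennreal \<theta> * ennreal (energy h \<alpha>a pa \<nu>) + ennreal (1 - \<theta>) * ennreal (energy h \<alpha>b pb \<nu>) \<partial>M)"
      unfolding avg_energy_def
    proof (rule nn_integral_cong)
      fix \<nu> assume v: "\<nu> \<in> space M"
      show "ennreal (energy h \<alpha>c pc \<nu>) = ennreal \<theta> * ennreal (energy h \<alpha>a pa \<nu>) + ennreal (1 - \<theta>) * ennreal (energy h \<alpha>b pb \<nu>)"
        using emix[OF v] enn[OF v, of \<alpha>a pa] enn[OF v, of \<alpha>b pb] ba[OF v] bb[OF v] assms(14,15)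
        by (simp add: ennreal_mult ennreal_plus)
    qed
    also have "\<dots> = ennreal \<theta> * avg_energy M h pa \<alpha>a + ennreal (1 - \<theta>) * avg_energy M h pb \<alpha>b"
      unfolding avg_energy_def using mea meb
      by (simp add: nn_integral_add nn_integral_cmult)
    also have "\<dots> \<ge> ennreal \<theta> * ennreal Qa + ennreal (1 - \<theta>) * ennreal Qb"
      using fa(2) fb(2) by (intro add_mono mult_left_mono) auto
    moreover have "ennreal \<theta> * ennreal Qa + ennreal (1 - \<theta>) * ennreal Qb = ennreal (\<theta> * Qa + (1 - \<theta>) * Qb)"
      using assms(8,9,14,15) by (simp add: ennreal_mult ennreal_plus)
    ultimately show ?thesis by simp
  qed
  have ia: "integrable M pa"
    by (rule integrable_const_bound[where B=Ppeak]) (use ba ma in auto)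
  have ib: "integrable M pb"
    by (rule integrable_const_bound[where B=Ppeak]) (use bb mb in auto)
  have "(\<integral>\<nu>. pc \<nu> \<partial>M) = \<theta> * (\<integral>\<nu>. pa \<nu> \<partial>M) + (1 - \<theta>) * (\<integral>\<nu>. pb \<nu> \<partial>M)"
    unfolding pc_def using ia ib by simp
  also have "\<dots> \<le> \<theta> * Pa + (1 - \<theta>) * Pb"
    using fa(3) fb(3) assms(14,15) by (intro add_mono mult_left_mono) auto
  finally have power_ok: "(\<integral>\<nu>. pc \<nu> \<partial>M) \<le> \<theta> * Pa + (1 - \<theta>) * Pb" .
  show ?thesis using feas rate_ok energy_ok power_ok by blast
qed

end
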